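(* For every infinite sequence of integers $a_1,a_2,a_3,\dots$ there exists a rod set $R$ such that $F(n,R)=a_n$ for all $n\ge1$.
   Context: A rod is a triple $(r,c,\varepsilon)$ with $r$ a positive integer (its length), $c$ an arbitrary tag (a "color"), and $\varepsilon\in\{+1,-1\}$ its sign; a rod of sign $-1$ is an antirod. A rod set is a set of rods with only finitely many rods of each length. A train built from $R$ is a finite sequence of rods of $R$, including the empty train; its length is the sum of the rod lengths and its sign the product of the rod signs. The net train count $F(n,R)$ is the number of positive trains of length $n$ built from $R$ minus the number of negative ones (so $F(0,R)=1$). *)

theory Defs
  imports Main
begin

text \<open>A rod is a triple (length, colour, sign).\<close>
type_synonym 'c rod = "nat \<times> 'c \<times> int"

definition rod_len :: "'c rod \<Rightarrow> nat" where "rod_len x = fst x"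
definition rod_sign :: "'c rod \<Rightarrow> int" where "rod_sign x = snd (snd x)"

definition is_rod :: "'c rod \<Rightarrow> bool" where
  "is_rod x \<longleftrightarrow> rod_len x > 0 \<and> (rod_sign x = 1 \<or> rod_sign x = -1)"

definition rod_set :: "'c rod set \<Rightarrow> bool" where
  "rod_set R \<longleftrightarrow> (\<forall>x\<in>R. is_rod x) \<and> (\<forall>n. finite {x\<in>R. rod_len x = n})"

definition train_len :: "'c rod list \<Rightarrow> nat" where
  "train_len t = sum_list (map rod_len t)"

definition train_sign :: "'c rod list \<Rightarrow> int" where
  "train_sign t = prod_list (map rod_sign t)"

definition trains :: "'c rod set \<Rightarrow> nat \<Rightarrow> 'c rod list set" where
  "trains R n = {t. set t \<subseteq> R \<and> train_len t = n}"

definition F :: "nat \<Rightarrow> 'c rod set \<Rightarrow> int" where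
  "F n R = int (card {t\<in>trains R n. train_sign t = 1}) - int (card {t\<in>trains R n. train_sign t = -1})"

end

theory Submission
  imports Defs
begin

function dd :: "(nat \<Rightarrow> int) \<Rightarrow> nat \<Rightarrow> int" where
  "dd b n = b n - (\<Sum>k\<in>{1..<n}. dd b k * b (n - k))"
  by pat_completeness auto
termination by (relation "measure snd") auto

declare dd.simps[simp del]

definition S :: "'c rod set \<Rightarrow> nat \<Rightarrow> int" where
  "S R n = (\<Sum>t\<in>trains R n. train_sign t)"

lemma trains_0:
  assumes "rod_set R" shows "trains R 0 = {[]}"
proof -
  have "t = []" if "t \<in> trains R 0" for t
    using that assms
    by (cases t) (auto simp: trains_def train_len_def rod_set_def is_rod_def)
  then show ?thesis by (auto simp: trains_def train_len_def)
qed

lemma trains_decomp: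
  assumes "rod_set R" "n > 0"
  shows "trains R n = (\<Union>x\<in>{x\<in>R. rod_len x \<le> n}. (#) x ` trains R (n - rod_len x))"
proof
  show "trains R n \<subseteq> (\<Union>x\<in>{x\<in>R. rod_len x \<le> n}. (#) x ` trains R (n - rod_len x))"
  proof
    fix t assume t: "t \<in> trains R n"
    then obtain x t' where tx: "t = x # t'"
      using assms(2) by (cases t) (auto simp: trains_def train_len_def)
    show "t \<in> (\<Union>x\<in>{x\<in>R. rod_len x \<le> n}. (#) x ` trains R (n - rod_len x))"
    proof (rule UN_I[of x])
      show "x \<in> {x\<in>R. rod_len x \<le> n}" using t tx by (auto simp: trains_def train_len_def)
      show "t \<in> (#) x ` trains R (n - rod_len x)" using t tx by (auto simp: trains_def train_len_def)
    qed
  qed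
next
  show "(\<Union>x\<in>{x\<in>R. rod_len x \<le> n}. (#) x ` trains R (n - rod_len x)) \<subseteq> trains R n"
    by (auto simp: trains_def train_len_def)
qed

lemma finite_Rle:
  assumes "rod_set R" shows "finite {x\<in>R. rod_len x \<le> n}"
proof -
  have "{x\<in>R. rod_len x \<le> n} = (\<Union>k\<in>{..n}. {x\<in>R. rod_len x = k})" by auto
  then show ?thesis using assms by (auto simp: rod_set_def)
qed

lemma finite_trains:
  assumes "rod_set R" shows "finite (trains R n)"
proof (induction n rule: less_induct)
  case (less n)
  show ?case
  proof (cases "n = 0")
    case True then show ?thesis using trains_0[OF assms] by simp
  next
    case False
    have "finite ((#) x ` trains R (n - rod_len x))" if "x \<in> R" for x
    proof -
      have "rod_len x > 0" using that assms by (auto simp: rod_set_def is_rod_def)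
      then show ?thesis using less False by simp
    qed
    then show ?thesis using trains_decomp[OF assms] False finite_Rle[OF assms] by auto
  qed
qed

lemma S_rec:
  assumes "rod_set R" "n > 0"
  shows "S R n = (\<Sum>x\<in>{x\<in>R. rod_len x \<le> n}. rod_sign x * S R (n - rod_len x))"
proof -
  have "S R n = (\<Sum>x\<in>{x\<in>R. rod_len x \<le> n}. \<Sum>t\<in>(#) x ` trains R (n - rod_len x). train_sign t)"
    unfolding S_def trains_decomp[OF assms]
    by (rule sum.UNION_disjoint) (auto simp: finite_Rle[OF assms(1)] finite_trains[OF assms(1)])
  also have "\<dots> = (\<Sum>x\<in>{x\<in>R. rod_len x \<le> n}. rod_sign x * S R (n - rod_len x))"
  proof (rule sum.cong)
    fix x
    have "(\<Sum>t\<in>(#) x ` trains R (n - rod_len x). train_sign t)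
        = (\<Sum>t\<in>trains R (n - rod_len x). train_sign (x # t))"
      by (subst sum.reindex) (auto simp: inj_on_def)
    also have "\<dots> = rod_sign x * S R (n - rod_len x)"
      by (simp add: S_def train_sign_def sum_distrib_left)
    finally show "(\<Sum>t\<in>(#) x ` trains R (n - rod_len x). train_sign t) = rod_sign x * S R (n - rod_len x)" .
  qed simp
  finally show ?thesis .
qed

lemma sign_pm:
  assumes "rod_set R" "t \<in> trains R n"
  shows "train_sign t = 1 \<or> train_sign t = -1"
proof -
  have "set t \<subseteq> R" using assms by (auto simp: trains_def)
  then show ?thesis
  proof (induction t)
    case Nil then show ?case by (simp add: train_sign_def)
  next
    case (Cons x t)
    then have "rod_sign x = 1 \<or> rod_sign x = -1" using assms(1) by (auto simp: rod_set_def is_rod_def)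
    then show ?case using Cons by (auto simp: train_sign_def)
  qed
qed

lemma F_S:
  assumes "rod_set R" shows "F n R = S R n"
proof -
  let ?P = "{t\<in>trains R n. train_sign t = 1}"
  let ?N = "{t\<in>trains R n. train_sign t = -1}"
  have fin: "finite (trains R n)" using finite_trains[OF assms] .
  have eq: "trains R n = ?P \<union> ?N" using sign_pm[OF assms] by auto
  have "S R n = sum train_sign (?P \<union> ?N)" unfolding S_def using eq by simp
  also have "\<dots> = (\<Sum>t\<in>?P. train_sign t) + (\<Sum>t\<in>?N. train_sign t)"
    by (rule sum.union_disjoint) (use fin in auto)
  also have "\<dots> = int (card ?P) - int (card ?N)" by simp
  finally show ?thesis by (simp add: F_def)
qed

definition RR :: "(nat \<Rightarrow> int) \<Rightarrow> nat rod set" where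
  "RR d = {(k, c, s). k \<ge> 1 \<and> c < nat \<bar>d k\<bar> \<and> s = sgn (d k)}"

lemma RR_rod_set: "rod_set (RR d)"
proof -
  have "{x\<in>RR d. rod_len x = n} \<subseteq> (\<lambda>c. (n, c, sgn (d n))) ` {..<nat \<bar>d n\<bar>}" for n
    by (auto simp: RR_def rod_len_def)
  then have "finite {x\<in>RR d. rod_len x = n}" for n by (meson finite_imageI finite_lessThan finite_subset)
  moreover have "is_rod x" if "x \<in> RR d" for x
    using that by (auto simp: RR_def is_rod_def rod_len_def rod_sign_def sgn_if split: if_splits)
  ultimately show ?thesis by (auto simp: rod_set_def)
qed

lemma RR_le: "{x\<in>RR d. rod_len x \<le> n} = (\<lambda>(k, c). (k, c, sgn (d k))) ` Sigma {1..n} (\<lambda>k. {..<nat \<bar>d k\<bar>})"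
proof
  show "{x\<in>RR d. rod_len x \<le> n} \<subseteq> (\<lambda>(k, c). (k, c, sgn (d k))) ` Sigma {1..n} (\<lambda>k. {..<nat \<bar>d k\<bar>})"
  proof
    fix x assume x: "x \<in> {x\<in>RR d. rod_len x \<le> n}"
    obtain k c s where xe: "x = (k, c, s)" by (cases x) auto
    have "k \<ge> 1" "c < nat \<bar>d k\<bar>" "s = sgn (d k)" "k \<le> n"
      using x unfolding xe by (auto simp: RR_def rod_len_def)
    then show "x \<in> (\<lambda>(k, c). (k, c, sgn (d k))) ` Sigma {1..n} (\<lambda>k. {..<nat \<bar>d k\<bar>})"
      unfolding xe by (intro image_eqI[of _ _ "(k, c)"]) auto
  qed
  show "(\<lambda>(k, c). (k, c, sgn (d k))) ` Sigma {1..n} (\<lambda>k. {..<nat \<bar>d k\<bar>}) \<subseteq> {x\<in>RR d. rod_len x \<le> n}"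
  proof
    fix x assume "x \<in> (\<lambda>(k, c). (k, c, sgn (d k))) ` Sigma {1..n} (\<lambda>k. {..<nat \<bar>d k\<bar>})"
    then obtain k c where kc: "k \<in> {1..n}" "c < nat \<bar>d k\<bar>" and xe: "x = (k, c, sgn (d k))" by auto
    have "(k, c, sgn (d k)) \<in> RR d" using kc unfolding RR_def by simp
    then show "x \<in> {x\<in>RR d. rod_len x \<le> n}" using kc xe by (simp add: rod_len_def)
  qed
qed

lemma S_RR:
  assumes "n > 0"
  shows "S (RR d) n = (\<Sum>k\<in>{1..n}. d k * S (RR d) (n - k))"
proof -
  have "S (RR d) n = (\<Sum>x\<in>{x\<in>RR d. rod_len x \<le> n}. rod_sign x * S (RR d) (n - rod_len x))"
    using S_rec[OF RR_rod_set assms] .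
  also have "\<dots> = (\<Sum>(k, c)\<in>Sigma {1..n} (\<lambda>k. {..<nat \<bar>d k\<bar>}). sgn (d k) * S (RR d) (n - k))"
    unfolding RR_le
    by (subst sum.reindex) (auto simp: inj_on_def rod_sign_def rod_len_def intro!: sum.cong)
  also have "\<dots> = (\<Sum>k\<in>{1..n}. \<Sum>c\<in>{..<nat \<bar>d k\<bar>}. sgn (d k) * S (RR d) (n - k))"
    by (subst sum.Sigma) auto
  also have "\<dots> = (\<Sum>k\<in>{1..n}. d k * S (RR d) (n - k))"
  proof (rule sum.cong)
    fix k
    have dk: "int (nat \<bar>d k\<bar>) * sgn (d k) = d k" by (simp add: sgn_if)
    have "(\<Sum>c\<in>{..<nat \<bar>d k\<bar>}. sgn (d k) * S (RR d) (n - k)) = of_nat (nat \<bar>d k\<bar>) * (sgn (d k) * S (RR d) (n - k))"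
      by simp
    also have "\<dots> = (int (nat \<bar>d k\<bar>) * sgn (d k)) * S (RR d) (n - k)"
      by (simp only: mult.assoc of_nat_id)
    also have "\<dots> = d k * S (RR d) (n - k)" by (simp only: dk)
    finally show "(\<Sum>c\<in>{..<nat \<bar>d k\<bar>}. sgn (d k) * S (RR d) (n - k)) = d k * S (RR d) (n - k)" .
  qed simp
  finally show ?thesis .
qed

theorem theorem2:
  fixes a :: "nat \<Rightarrow> int"
  shows "\<exists>R :: nat rod set. rod_set R \<and> (\<forall>n\<ge>1. F n R = a n)"
proof -
  define b where "b n = (if n = 0 then 1 else a n)" for n
  define d where "d = dd b"
  define R where "R = RR d"
  have S0: "S R 0 = 1" unfolding R_def S_def using trains_0[OF RR_rod_set]
    by (simp add: train_sign_def)
  have "S R n = b n" for n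
  proof (induction n rule: less_induct)
    case (less n)
    show ?case
    proof (cases "n = 0")
      case True then show ?thesis using S0 by (simp add: b_def)
    next
      case False
      have dn: "d n = b n - (\<Sum>k\<in>{1..<n}. d k * b (n - k))" unfolding d_def by (rule dd.simps)
      have "S R n = (\<Sum>k\<in>{1..n}. d k * S R (n - k))" unfolding R_def using S_RR False by simp
      also have "{1..n} = insert n {1..<n}" using False by auto
      also have "(\<Sum>k\<in>insert n {1..<n}. d k * S R (n - k)) = d n * S R 0 + (\<Sum>k\<in>{1..<n}. d k * S R (n - k))"
        by (subst sum.insert) auto
      also have "(\<Sum>k\<in>{1..<n}. d k * S R (n - k)) = (\<Sum>k\<in>{1..<n}. d k * b (n - k))"
      proof (rule sum.cong)
        fix k assume "k \<in> {1..<n}"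
        then have "n - k < n" by auto
        then show "d k * S R (n - k) = d k * b (n - k)" using less by simp
      qed simp
      also have "d n * S R 0 + (\<Sum>k\<in>{1..<n}. d k * b (n - k)) = b n" using S0 dn by simp
      finally show ?thesis .
    qed
  qed
  then have "F n R = a n" if "n \<ge> 1" for n using that F_S[OF RR_rod_set] unfolding R_def b_def by simp
  then show ?thesis using RR_rod_set R_def by blast
qed

end
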